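(* Let $\alpha$ and $\beta$ be positive reals with $3\alpha < \beta$. Let $n$ be a positive integer, let $\sqrt{\log n/n} \ll p = p(n) \le 1$ and let $D \in \mathcal{D}(n,p)$. Then a.a.s. the following holds for every nonempty $S \subseteq [n]$ of size $s \le \alpha n$ and every set $T$ of $s$ ordered pairs (arcs) with both endpoints in $[n]\setminus S$ which span a digraph with maximum out-degree one and maximum in-degree one: there are fewer than $\beta s p^2 n$ pairs $((x,y),z) \in T \times S$ such that $(x,z) \in E(D)$ and $(z,y) \in E(D)$.
   Context: $\mathcal{D}(n,p)$ is the random digraph on $[n]$ where each ordered pair $(u,v)$, $u\ne v$, is an arc independently with probability $p$; $E(D)$ is its arc set. a.a.s. means with probability tending to $1$ as $n\to\infty$; $f \ll g$ means $f/g\to0$; $\log$ is natural. *)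

theory Defs
  imports "HOL-Probability.Probability"
begin

definition possible_arcs :: "nat \<Rightarrow> (nat \<times> nat) set" where
  "possible_arcs n = {(u, v). u \<in> {1..n} \<and> v \<in> {1..n} \<and> u \<noteq> v}"

definition random_digraph :: "nat \<Rightarrow> real \<Rightarrow> (nat \<times> nat) set pmf" where
  "random_digraph n p =
     map_pmf (\<lambda>f. {e. f e}) (Pi_pmf (possible_arcs n) False (\<lambda>_. bernoulli_pmf p))"

definition max_deg_one :: "(nat \<times> nat) set \<Rightarrow> bool" where
  "max_deg_one T \<longleftrightarrow>
     (\<forall>x. card {y. (x, y) \<in> T} \<le> 1) \<and> (\<forall>y. card {x. (x, y) \<in> T} \<le> 1)"

definition lemma4p3_property ::
    "real \<Rightarrow> real \<Rightarrow> nat \<Rightarrow> real \<Rightarrow> (nat \<times> nat) set \<Rightarrow> bool" where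
  "lemma4p3_property \<alpha> \<beta> n p E \<longleftrightarrow>
     (\<forall>S T. S \<subseteq> {1..n} \<and> S \<noteq> {} \<and> real (card S) \<le> \<alpha> * real n \<and>
        T \<subseteq> ({1..n} - S) \<times> ({1..n} - S) \<and> card T = card S \<and> max_deg_one T \<longrightarrow>
        real (card {((x, y), z) \<in> T \<times> S. (x, z) \<in> E \<and> (z, y) \<in> E})
          < \<beta> * real (card S) * p\<^sup>2 * real n)"

end

theory Submission
  imports Defs "HOL-Real_Asymp.Real_Asymp"
begin


lemma finite_possible_arcs: "finite (possible_arcs n)"
proof -
  have "possible_arcs n \<subseteq> {1..n} \<times> {1..n}" by (auto simp: possible_arcs_def)
  thus ?thesis by (rule finite_subset) auto
qed

lemma prob_arcs_present:
  assumes "A \<subseteq> possible_arcs n" "0 \<le> p" "p \<le> 1"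
  shows "measure_pmf.prob (random_digraph n p) {E. A \<subseteq> E} = p ^ card A"
proof -
  have fin: "finite A" using assms(1) finite_possible_arcs finite_subset by blast
  have "measure_pmf.prob (random_digraph n p) {E. A \<subseteq> E}
     = measure_pmf.prob (Pi_pmf (possible_arcs n) False (\<lambda>_. bernoulli_pmf p))
         (Pi (possible_arcs n) (\<lambda>e. if e \<in> A then {True} else UNIV))"
    unfolding random_digraph_def measure_map_pmf
    by (rule arg_cong[where f="measure_pmf.prob _"]) (use assms(1) in \<open>auto simp: Pi_iff, metis singletonD subsetD\<close>)
  also have "\<dots> = (\<Prod>e\<in>possible_arcs n. measure_pmf.prob (bernoulli_pmf p) (if e \<in> A then {True} else UNIV))"
    by (rule measure_Pi_pmf_Pi[OF finite_possible_arcs])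
  also have "\<dots> = (\<Prod>e\<in>possible_arcs n. if e \<in> A then p else 1)"
    by (rule prod.cong) (use assms in \<open>auto simp: measure_pmf_single\<close>)
  also have "\<dots> = p ^ card A"
    using prod.If_cases[OF finite_possible_arcs, of "\<lambda>e. e \<in> A" "\<lambda>_. p" "\<lambda>_. 1"] assms(1)
    by (simp add: Int_absorb1[OF assms(1)])
  finally show ?thesis .
qed



definition arcsP :: "((nat \<times> nat) \<times> nat) set \<Rightarrow> (nat \<times> nat) set" where
  "arcsP P = (\<lambda>((x,y),z). (x,z)) ` P \<union> (\<lambda>((x,y),z). (z,y)) ` P"

lemma witness:
  assumes S: "S \<subseteq> {1..n}" and T: "T \<subseteq> ({1..n} - S) \<times> ({1..n} - S)"
    and fT: "finite T" and md: "max_deg_one T"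
    and P: "P \<subseteq> T \<times> S"
  shows "arcsP P \<subseteq> possible_arcs n" and "card (arcsP P) = 2 * card P"
proof -
  show "arcsP P \<subseteq> possible_arcs n"
    using S T P unfolding arcsP_def possible_arcs_def by fastforce
  have fP: "finite P"
    using P fT finite_subset S by (meson finite_SigmaI finite_atLeastAtMost finite_subset)
  have u1: "\<And>x y y'. (x,y) \<in> T \<Longrightarrow> (x,y') \<in> T \<Longrightarrow> y = y'"
  proof -
    fix x y y' assume a: "(x,y) \<in> T" "(x,y') \<in> T"
    have "finite {y. (x, y) \<in> T}"
      by (rule finite_subset[of _ "snd ` T"]) (use fT in force)+
    moreover have "card {y. (x, y) \<in> T} \<le> Suc 0" using md by (simp add: max_deg_one_def)
    ultimately show "y = y'" using a card_le_Suc0_iff_eq by blast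
  qed
  have u2: "\<And>x x' y. (x,y) \<in> T \<Longrightarrow> (x',y) \<in> T \<Longrightarrow> x = x'"
  proof -
    fix x x' y assume a: "(x,y) \<in> T" "(x',y) \<in> T"
    have "finite {x. (x, y) \<in> T}"
      by (rule finite_subset[of _ "fst ` T"]) (use fT in force)+
    moreover have "card {x. (x, y) \<in> T} \<le> Suc 0" using md by (simp add: max_deg_one_def)
    ultimately show "x = x'" using a card_le_Suc0_iff_eq by blast
  qed
  have i1: "inj_on (\<lambda>((x,y),z). (x,z)) P"
    using P u1 unfolding inj_on_def by fastforce
  have i2: "inj_on (\<lambda>((x,y),z). (z,y)) P"
    using P u2 unfolding inj_on_def by fastforce
  have d: "(\<lambda>((x,y),z). (x,z)) ` P \<inter> (\<lambda>((x,y),z). (z,y)) ` P = {}"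
    using P T by fastforce
  show "card (arcsP P) = 2 * card P"
    unfolding arcsP_def
    using card_Un_disjoint[OF finite_imageI[OF fP] finite_imageI[OF fP] d]
          card_image[OF i1] card_image[OF i2] by simp
qed



lemma exp_ge_pow_fact: "(x::real) \<ge> 0 \<Longrightarrow> x ^ k / fact k \<le> exp x"
proof -
  assume x: "x \<ge> 0"
  have "(\<lambda>j. x ^ j /\<^sub>R fact j) sums exp x" by (rule exp_converges)
  hence "sum (\<lambda>j. x ^ j /\<^sub>R fact j) {k} \<le> exp x"
    using sum_le_suminf[of "\<lambda>j. x ^ j /\<^sub>R fact j" "{k}"] x
    by (simp add: sums_iff)
  thus ?thesis by (simp add: divide_inverse mult.commute)
qed

lemma fact_lower: "(real k / exp 1) ^ k \<le> fact k"
proof -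
  have "real k ^ k / fact k \<le> exp (real k)" by (rule exp_ge_pow_fact) simp
  also have "exp (real k) = exp 1 ^ k" using exp_of_nat_mult[of k 1] by simp
  finally have "real k ^ k \<le> exp 1 ^ k * fact k"
    by (simp add: divide_le_eq)
  thus ?thesis by (simp add: power_divide divide_le_eq mult.commute)
qed

lemma choose_q_bound:
  fixes q :: real
  assumes "0 \<le> q" "1 \<le> k"
  shows "real (N choose k) * q ^ k \<le> (real N * q * exp 1 / real k) ^ k"
proof -
  have "real (N choose k) * fact k \<le> real N ^ k"
    using binomial_fact_pow[of N k] by (metis of_nat_fact of_nat_le_iff of_nat_mult of_nat_power)
  hence "real (N choose k) * (real k / exp 1) ^ k \<le> real N ^ k"
    using fact_lower[of k] by (meson mult_left_mono of_nat_0_le_iff order_trans)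
  hence "real (N choose k) \<le> real N ^ k / (real k / exp 1) ^ k"
    using assms by (simp add: le_divide_eq)
  hence "real (N choose k) * q ^ k \<le> real N ^ k / (real k / exp 1) ^ k * q ^ k"
    by (rule mult_right_mono) (use assms in auto)
  also have "\<dots> = (real N * q * exp 1 / real k) ^ k"
    by (simp add: power_divide power_mult_distrib)
  finally show ?thesis .
qed



lemma term_bound:
  fixes q \<alpha> \<beta> r :: real and n s k :: nat
  assumes q: "0 < q" and a: "0 < \<alpha>" and b: "0 < \<beta>" and r: "r = exp 1 * \<alpha> / \<beta>" "r < 1"
    and s: "1 \<le> s" "real s \<le> \<alpha> * real n" and n: "1 \<le> n"
    and k: "k = nat \<lceil>\<beta> * real s * q * real n\<rceil>"
  shows "real (s * s choose k) * q ^ k \<le> (r powr (\<beta> * q * real n)) ^ s"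
proof -
  define K where "K = \<beta> * real s * q * real n"
  have K0: "0 < K" unfolding K_def using q b s n by simp
  have kK: "K \<le> real k" unfolding k K_def[symmetric] by linarith
  have k1: "1 \<le> k" using K0 kK unfolding k K_def[symmetric] by linarith
  have r0: "0 < r" using r a b by simp
  have "real (s * s choose k) * q ^ k \<le> (real (s * s) * q * exp 1 / real k) ^ k"
    by (rule choose_q_bound) (use q k1 in auto)
  also have "\<dots> \<le> r ^ k"
  proof (rule power_mono)
    have "real (s * s) * q * exp 1 / real k \<le> real (s * s) * q * exp 1 / K"
      by (rule divide_left_mono) (use K0 kK q in auto)
    also have "\<dots> = exp 1 * real s / (\<beta> * real n)"
      unfolding K_def using q s by (simp add: field_simps)
    also have "\<dots> \<le> exp 1 * (\<alpha> * real n) / (\<beta> * real n)"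
      by (rule divide_right_mono) (use s b n in auto)
    also have "\<dots> = r" using r n by simp
    finally show "real (s * s) * q * exp 1 / real k \<le> r" .
    show "0 \<le> real (s * s) * q * exp 1 / real k" using q by simp
  qed
  also have "r ^ k = r powr real k" using r0 by (simp add: powr_realpow)
  also have "\<dots> \<le> r powr K"
    using kK r0 r(2) by (simp add: powr_mono')
  also have "r powr K = (r powr (\<beta> * q * real n)) ^ s"
    unfolding K_def using r0 by (simp add: powr_powr[symmetric] powr_realpow[symmetric] mult_ac)
  finally show ?thesis .
qed



lemma card_subsets_le:
  assumes "finite A" "\<And>X. X \<in> F \<Longrightarrow> X \<subseteq> A \<and> card X = k"
  shows "card F \<le> card A choose k"
proof -
  have "F \<subseteq> {X. X \<subseteq> A \<and> card X = k}" using assms(2) by blast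
  hence "card F \<le> card {X. X \<subseteq> A \<and> card X = k}"
    by (rule card_mono[rotated]) (use assms(1) in simp)
  thus ?thesis using n_subsets[OF assms(1)] by simp
qed

lemma finite_subsets_of: "finite A \<Longrightarrow> (\<And>X. X \<in> F \<Longrightarrow> X \<subseteq> A) \<Longrightarrow> finite F"
  by (metis Pow_iff finite_Pow_iff rev_finite_subset subsetI)

lemma bad_bound:
  fixes \<alpha> \<beta> p r :: real and n :: nat
  assumes p: "0 < p" "p \<le> 1" and a: "0 < \<alpha>" and b: "0 < \<beta>"
    and r: "r = exp 1 * \<alpha> / \<beta>" "r < 1" and n: "1 \<le> n"
  shows "measure_pmf.prob (random_digraph n p) {E. \<not> lemma4p3_property \<alpha> \<beta> n p E}
         \<le> (\<Sum>s\<in>{1..n}. (real n ^ 3 * r powr (\<beta> * p\<^sup>2 * real n)) ^ s)"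
proof -
  define q where "q = p\<^sup>2"
  have q0: "0 < q" using p by (simp add: q_def)
  define Sr where "Sr = {s\<in>{1..n}. real s \<le> \<alpha> * real n}"
  define k where "k s = nat \<lceil>\<beta> * real s * q * real n\<rceil>" for s :: nat
  define Sset where "Sset s = {S. S \<subseteq> {1..n} \<and> card S = s}" for s :: nat
  define Tset where "Tset S = {T. T \<subseteq> ({1..n} - S) \<times> ({1..n} - S) \<and> card T = card S \<and> max_deg_one T}"
    for S :: "nat set"
  define Pset where "Pset S T kk = {P. P \<subseteq> T \<times> S \<and> card P = kk}"
    for S :: "nat set" and T :: "(nat \<times> nat) set" and kk :: nat
  define I where "I s = Sigma (Sset s) (\<lambda>S. Sigma (Tset S) (\<lambda>T. Pset S T (k s)))" for s
  define J where "J = Sigma Sr I"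
  define ev where "ev j = {E. arcsP (snd (snd (snd j))) \<subseteq> E}" for j :: "nat \<times> nat set \<times> (nat \<times> nat) set \<times> ((nat \<times> nat) \<times> nat) set"
  let ?M = "random_digraph n p"
  have finS: "finite (Sset s)" for s
    by (rule finite_subsets_of[of "{1..n}"]) (auto simp: Sset_def)
  have finT: "finite (Tset S)" for S
    by (rule finite_subsets_of[of "{1..n} \<times> {1..n}"]) (auto simp: Tset_def)
  have finTT: "T \<in> Tset S \<Longrightarrow> S \<in> Sset s \<Longrightarrow> finite (T \<times> S)" for S T s
    by (rule finite_subset[of _ "({1..n} \<times> {1..n}) \<times> {1..n}"]) (auto simp: Tset_def Sset_def)
  have finP: "T \<in> Tset S \<Longrightarrow> S \<in> Sset s \<Longrightarrow> finite (Pset S T kk)" for S T s kk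
    by (rule finite_subsets_of[of "T \<times> S"]) (auto simp: Pset_def finTT)
  have finI: "finite (I s)" for s
    unfolding I_def using finS finT finP by (auto intro!: finite_SigmaI)
  have finJ: "finite J" unfolding J_def Sr_def using finI by auto

  have step1: "{E. \<not> lemma4p3_property \<alpha> \<beta> n p E} \<subseteq> (\<Union>j\<in>J. ev j)"
  proof
    fix E assume "E \<in> {E. \<not> lemma4p3_property \<alpha> \<beta> n p E}"
    hence "\<exists>S T. (S \<subseteq> {1..n} \<and> S \<noteq> {} \<and> real (card S) \<le> \<alpha> * real n \<and>
        T \<subseteq> ({1..n} - S) \<times> ({1..n} - S) \<and> card T = card S \<and> max_deg_one T) \<and>
        \<beta> * real (card S) * p\<^sup>2 * real n \<le>
                  real (card {((x, y), z) \<in> T \<times> S. (x, z) \<in> E \<and> (z, y) \<in> E})"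
      unfolding lemma4p3_property_def mem_Collect_eq not_all not_imp not_less by blast
    then obtain S T where S: "S \<subseteq> {1..n}" "S \<noteq> {}" "real (card S) \<le> \<alpha> * real n"
      and T: "T \<subseteq> ({1..n} - S) \<times> ({1..n} - S)" "card T = card S" "max_deg_one T"
      and big: "\<beta> * real (card S) * p\<^sup>2 * real n \<le>
                  real (card {((x, y), z) \<in> T \<times> S. (x, z) \<in> E \<and> (z, y) \<in> E})"
      by blast
    define s where "s = card S"
    define B where "B = {((x, y), z) \<in> T \<times> S. (x, z) \<in> E \<and> (z, y) \<in> E}"
    have fS: "finite S" using S(1) finite_subset by blast
    have s1: "1 \<le> s" using S(2) fS s_def by (simp add: Suc_le_eq card_gt_0_iff)
    have sn: "s \<le> n" using card_mono[OF _ S(1)] s_def by simp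
    have fT: "finite T" by (rule finite_subset[OF T(1)]) auto
    have "k s \<le> card B" using big unfolding k_def B_def q_def s_def by (simp add: nat_le_iff ceiling_le_iff)
    then obtain P where P: "P \<subseteq> B" "card P = k s" by (meson obtain_subset_with_card_n)
    have PTS: "P \<subseteq> T \<times> S" using P(1) B_def by auto
    have "arcsP P \<subseteq> E" using P(1) unfolding B_def arcsP_def by auto
    moreover have "(s, S, T, P) \<in> J"
    proof -
      have "s \<in> Sr" unfolding Sr_def using s1 sn S(3) s_def by simp
      moreover have "S \<in> Sset s" unfolding Sset_def using S(1) s_def by simp
      moreover have "T \<in> Tset S" unfolding Tset_def using T by simp
      moreover have "P \<in> Pset S T (k s)" unfolding Pset_def using PTS P(2) by simp
      ultimately show ?thesis unfolding J_def I_def by simp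
    qed
    ultimately show "E \<in> (\<Union>j\<in>J. ev j)" unfolding ev_def by force
  qed

  have step3: "measure_pmf.prob ?M (ev j) = q ^ k (fst j)" if j: "j \<in> J" for j
  proof -
    obtain s S T P where jj: "j = (s, S, T, P)" by (metis prod_cases4)
    have S: "S \<subseteq> {1..n}" "card S = s" and T: "T \<subseteq> ({1..n} - S) \<times> ({1..n} - S)"
      "card T = card S" "max_deg_one T" and P: "P \<subseteq> T \<times> S" "card P = k s"
      and s1: "1 \<le> s"
      using j unfolding jj J_def I_def Sr_def Sset_def Tset_def Pset_def by auto
    have fT: "finite T" by (rule finite_subset[OF T(1)]) auto
    note w = witness[OF S(1) T(1) fT T(3) P(1)]
    have "measure_pmf.prob ?M (ev j) = p ^ card (arcsP P)"
      unfolding ev_def jj using prob_arcs_present[OF w(1)] p by simp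
    also have "\<dots> = q ^ k s" unfolding w(2) P(2) q_def by (simp add: power_mult)
    finally show ?thesis by (simp add: jj)
  qed

  have "measure_pmf.prob ?M {E. \<not> lemma4p3_property \<alpha> \<beta> n p E} \<le> measure_pmf.prob ?M (\<Union>j\<in>J. ev j)"
    by (rule measure_pmf.finite_measure_mono[OF step1]) simp
  also have "\<dots> \<le> (\<Sum>j\<in>J. measure_pmf.prob ?M (ev j))"
    by (rule measure_pmf.finite_measure_subadditive_finite[OF finJ]) simp
  also have "\<dots> = (\<Sum>j\<in>J. q ^ k (fst j))"
    by (rule sum.cong) (auto simp: step3)
  also have "\<dots> = (\<Sum>s\<in>Sr. \<Sum>i\<in>I s. q ^ k s)"
  proof -
    have fSr: "finite Sr" unfolding Sr_def by simp
    show ?thesis unfolding J_def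
      using sum.Sigma[OF fSr, of I "\<lambda>s i. q ^ k s"] finI by (simp add: split_beta)
  qed
  also have "\<dots> = (\<Sum>s\<in>Sr. real (card (I s)) * q ^ k s)"
    by simp
  also have "\<dots> \<le> (\<Sum>s\<in>Sr. (real n ^ 3 * r powr (\<beta> * p\<^sup>2 * real n)) ^ s)"
  proof (rule sum_mono)
    fix s assume sS: "s \<in> Sr"
    hence s1: "1 \<le> s" and sn: "s \<le> n" and sa: "real s \<le> \<alpha> * real n" unfolding Sr_def by auto
    have cI: "card (I s) = (\<Sum>S\<in>Sset s. \<Sum>T\<in>Tset S. card (Pset S T (k s)))"
      unfolding I_def using finS finT finP by (simp add: card_SigmaI)
    also have "\<dots> \<le> (\<Sum>S\<in>Sset s. \<Sum>T\<in>Tset S. (s * s) choose k s)"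
    proof (intro sum_mono)
      fix S T assume ST: "S \<in> Sset s" "T \<in> Tset S"
      have "card (T \<times> S) = s * s" using ST unfolding Sset_def Tset_def by (simp add: card_cartesian_product)
      thus "card (Pset S T (k s)) \<le> (s * s) choose k s"
        using card_subsets_le[OF finTT[OF ST(2,1)], of "Pset S T (k s)" "k s"] by (auto simp: Pset_def)
    qed
    also have "\<dots> = (\<Sum>S\<in>Sset s. card (Tset S)) * ((s * s) choose k s)"
      by (simp add: sum_distrib_right)
    also have "\<dots> \<le> (\<Sum>S\<in>Sset s. (n * n) choose s) * ((s * s) choose k s)"
    proof (intro mult_right_mono sum_mono)
      fix S assume "S \<in> Sset s"
      thus "card (Tset S) \<le> (n * n) choose s"
        using card_subsets_le[of "{1..n} \<times> {1..n}" "Tset S" s]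
        by (fastforce simp: Tset_def Sset_def)
    qed simp
    also have "\<dots> = (n choose s) * ((n * n) choose s) * ((s * s) choose k s)"
      using n_subsets[of "{1..n}" s] by (simp add: Sset_def)
    finally have cI': "card (I s) \<le> (n choose s) * ((n * n) choose s) * ((s * s) choose k s)" .
    have b1: "real (n choose s) \<le> real n ^ s" using binomial_le_pow[OF sn] by (metis of_nat_le_iff of_nat_power)
    have b2: "real ((n * n) choose s) \<le> (real n ^ 2) ^ s"
      using binomial_le_pow[of s "n*n"] sn
      by (metis le_square of_nat_le_iff of_nat_mult of_nat_power order_trans power2_eq_square)
    have tb: "real (s * s choose k s) * q ^ k s \<le> (r powr (\<beta> * q * real n)) ^ s"
      by (rule term_bound[OF q0 a b r s1 sa n]) (simp add: k_def)
    have "real (card (I s)) * q ^ k s \<le> real ((n choose s) * ((n * n) choose s) * ((s * s) choose k s)) * q ^ k s"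
    proof (rule mult_right_mono)
      show "real (card (I s)) \<le> real ((n choose s) * ((n * n) choose s) * ((s * s) choose k s))"
        using cI' by (simp only: of_nat_le_iff)
    qed (use q0 in simp)
    also have "\<dots> = real (n choose s) * real ((n * n) choose s) * (real ((s * s) choose k s) * q ^ k s)"
      by simp
    also have "\<dots> \<le> real n ^ s * (real n ^ 2) ^ s * (r powr (\<beta> * q * real n)) ^ s"
      using b1 b2 tb q0 by (intro mult_mono) auto
    also have "\<dots> = (real n ^ 3 * r powr (\<beta> * p\<^sup>2 * real n)) ^ s"
    proof -
      have "real n ^ s * (real n ^ 2) ^ s = (real n ^ 3) ^ s"
        by (simp flip: power_mult_distrib add: power2_eq_square power3_eq_cube mult.assoc)
      thus ?thesis by (simp add: q_def power_mult_distrib mult_ac)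
    qed
    finally show "real (card (I s)) * q ^ k s \<le> (real n ^ 3 * r powr (\<beta> * p\<^sup>2 * real n)) ^ s" .
  qed
  also have "\<dots> \<le> (\<Sum>s\<in>{1..n}. (real n ^ 3 * r powr (\<beta> * p\<^sup>2 * real n)) ^ s)"
    by (rule sum_mono2) (auto simp: Sr_def)
  finally show ?thesis .
qed



lemma geom_le: "(0::real) \<le> y \<Longrightarrow> 2 * y \<le> 1 \<Longrightarrow> (\<Sum>s\<in>{1..n}. y ^ s) \<le> 2 * y - 2 * y ^ (n + 1)"
proof (induction n)
  case 0 then show ?case by simp
next
  case (Suc n)
  have "(\<Sum>s\<in>{1..Suc n}. y ^ s) = (\<Sum>s\<in>{1..n}. y ^ s) + y ^ (n+1)" by simp
  also have "\<dots> \<le> 2 * y - 2 * y ^ (n + 1) + y ^ (n+1)" using Suc by simp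
  also have "\<dots> \<le> 2 * y - 2 * y ^ (Suc n + 1)"
  proof -
    have "2 * y ^ (n+2) \<le> y ^ (n+1)"
      using Suc.prems mult_right_mono[of "2*y" 1 "y^(n+1)"] by (simp add: mult_ac)
    thus ?thesis by simp
  qed
  finally show ?case .
qed

theorem lemma4p3:
  fixes \<alpha> \<beta> :: real and p :: "nat \<Rightarrow> real"
  assumes "0 < \<alpha>" and "0 < \<beta>" and "3 * \<alpha> < \<beta>"
    and "\<forall>n. p n \<le> 1"
    and "eventually (\<lambda>n. 0 < p n) sequentially"
    and "(\<lambda>n. sqrt (ln (real n) / real n) / p n) \<longlonglongrightarrow> 0"
  shows "(\<lambda>n. measure_pmf.prob (random_digraph n (p n))
            {E. lemma4p3_property \<alpha> \<beta> n (p n) E}) \<longlonglongrightarrow> 1"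
proof -
  note a = assms(1) and b = assms(2)
  define r where "r = exp 1 * \<alpha> / \<beta>"
  have r0: "0 < r" using a b by (simp add: r_def)
  have r1: "r < 1"
  proof -
    have "exp 1 * \<alpha> < 3 * \<alpha>" using e_less_272 a by simp
    thus ?thesis using assms(3) b by (simp add: r_def)
  qed
  have lr: "ln r < 0" using r0 r1 by simp
  define c where "c = - \<beta> * ln r / 6"
  have c0: "0 < c" using lr b by (simp add: c_def mult_pos_neg)
  have c0': "(0::real) ^ 2 < c" using c0 by simp
  have ev1: "eventually (\<lambda>n. (sqrt (ln (real n) / real n) / p n) ^ 2 < c) sequentially"
    using order_tendstoD(2)[OF tendsto_power[OF assms(6), of 2] c0'] .
  have ev: "eventually (\<lambda>n. 1 - 2 / real n ^ 3 \<le> measure_pmf.prob (random_digraph n (p n))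
            {E. lemma4p3_property \<alpha> \<beta> n (p n) E}) sequentially"
    using ev1 assms(5) eventually_ge_at_top[of 2]
  proof eventually_elim
    case (elim n)
    have pn: "0 < p n" "p n \<le> 1" using elim assms(4) by auto
    have n1: "1 \<le> n" using elim by simp
    have nr: "2 \<le> real n" using elim by simp
    have ln0: "0 \<le> ln (real n)" using n1 by simp
    have "(sqrt (ln (real n) / real n) / p n) ^ 2 = ln (real n) / (real n * (p n)\<^sup>2)"
      using ln0 by (simp add: power_divide)
    hence "ln (real n) / (real n * (p n)\<^sup>2) < c" using elim by simp
    hence lnb: "ln (real n) \<le> c * (real n * (p n)\<^sup>2)"
      using pn n1 by (simp add: divide_less_eq)
    define y where "y = real n ^ 3 * r powr (\<beta> * (p n)\<^sup>2 * real n)"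
    have "\<beta> * (p n)\<^sup>2 * real n * ln r \<le> - 6 * ln (real n)"
    proof -
      have "- 6 * ln (real n) \<ge> -6 * (c * (real n * (p n)\<^sup>2))" using lnb by simp
      also have "-6 * (c * (real n * (p n)\<^sup>2)) = \<beta> * (p n)\<^sup>2 * real n * ln r"
        by (simp add: c_def)
      finally show ?thesis by simp
    qed
    hence "r powr (\<beta> * (p n)\<^sup>2 * real n) \<le> exp (- 6 * ln (real n))"
      using r0 by (simp add: powr_def mult.commute)
    also have "exp (- 6 * ln (real n)) = 1 / real n ^ 6"
    proof -
      have "exp (6 * ln (real n)) = real n ^ 6"
        using exp_of_nat_mult[of 6 "ln (real n)"] n1 by simp
      thus ?thesis by (simp add: exp_minus inverse_eq_divide)
    qed
    finally have "y \<le> real n ^ 3 * (1 / real n ^ 6)" unfolding y_def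
      by (intro mult_left_mono) auto
    also have "\<dots> = 1 / real n ^ 3" using n1 by (simp add: field_simps)
    finally have yb: "y \<le> 1 / real n ^ 3" .
    have y0: "0 \<le> y" unfolding y_def by simp
    have "1 / real n ^ 3 \<le> 1 / 2"
    proof -
      have "real n \<le> real n ^ 3" using n1 by (intro self_le_power) auto
      hence "2 \<le> real n ^ 3" using nr by linarith
      thus ?thesis by (simp add: divide_le_eq)
    qed
    hence y2: "2 * y \<le> 1" using yb by simp
    have "measure_pmf.prob (random_digraph n (p n)) {E. \<not> lemma4p3_property \<alpha> \<beta> n (p n) E}
          \<le> (\<Sum>s\<in>{1..n}. y ^ s)"
      unfolding y_def by (rule bad_bound[OF pn a b r_def r1 n1])
    also have "\<dots> \<le> 2 * y - 2 * y ^ (n+1)" by (rule geom_le[OF y0 y2])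
    also have "\<dots> \<le> 2 / real n ^ 3" 
    proof -
      have "0 \<le> y ^ (n+1)" using y0 by simp
      thus ?thesis using yb by linarith
    qed
    finally have bad: "measure_pmf.prob (random_digraph n (p n)) {E. \<not> lemma4p3_property \<alpha> \<beta> n (p n) E}
          \<le> 2 / real n ^ 3" .
    have "{E. lemma4p3_property \<alpha> \<beta> n (p n) E} = space (measure_pmf (random_digraph n (p n)))
            - {E. \<not> lemma4p3_property \<alpha> \<beta> n (p n) E}" by auto
    hence "measure_pmf.prob (random_digraph n (p n)) {E. lemma4p3_property \<alpha> \<beta> n (p n) E}
        = 1 - measure_pmf.prob (random_digraph n (p n)) {E. \<not> lemma4p3_property \<alpha> \<beta> n (p n) E}"
      using measure_pmf.prob_compl[of "{E. \<not> lemma4p3_property \<alpha> \<beta> n (p n) E}" "random_digraph n (p n)"]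
      by simp
    thus ?case using bad by simp
  qed
  have lim: "(\<lambda>n. 1 - 2 / real n ^ 3) \<longlonglongrightarrow> 1" by real_asymp
  show ?thesis
    by (rule tendsto_sandwich[OF ev _ lim tendsto_const]) (simp add: measure_pmf.prob_le_1)
qed


end
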